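(* Let $\boldsymbol{\tau} \colon \mathsf{BPT} \to \mathbb K$ be a weighted troupe. For $n \geq 1$, let \[\omega_n = \sum_{T \in \mathsf{Branch}_n} \boldsymbol{\tau}(T)\quad\text{and}\quad\check{\omega}_n = \sum_{T \in \mathsf{BPT}_n} \boldsymbol{\tau}(T).\] Then, the generating functions \[\mathscr{B}(t) = \sum_{n \geq 1} \omega_n t^n\quad\text{and}\quad \mathscr T(t) = \sum_{n \geq 1} \check{\omega}_n t^n\] satisfy \[\mathscr T(t) = \mathscr B\left(\frac{t}{1 - t\mathscr T(t)}\right).\]
   Context: $\mathbb K$ is a commutative ring. $\mathsf{BPT}$ is the set of binary plane trees (rooted trees where each child is designated left or right, each vertex having at most one left and one right child), including the empty tree $\varnothing$; $\mathsf{BPT}_n$ is the set of those with $n$ vertices. A branch is a nonempty binary plane tree in which every vertex has at most one child; $\mathsf{Branch}_n$ is the set of branches with $n$ vertices. For nonempty binary plane trees $T_1,T_2$ and a vertex $v$ of $T_1$, the insertion $\nabla_v(T_1,T_2)$ is obtained by extending $v$ into a left edge (identifying $v$ with the bottom vertex and calling the new upper vertex $v^*$) and attaching $T_2$ as the right subtree of $v^*$. A weighted troupe is a function $\boldsymbol{\tau}\colon\mathsf{BPT}\to\mathbb K$ with $\boldsymbol{\tau}(\varnothing)=0$ and $\boldsymbol{\tau}(\nabla_v(T_1,T_2))=\boldsymbol{\tau}(T_1)\boldsymbol{\tau}(T_2)$ for all $T_1,T_2$ and all vertices $v\in T_1$ (here with a single color, i.e. trees are uncolored). *)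

theory Defs
  imports "HOL-Computational_Algebra.Formal_Power_Series"
begin

text \<open>Binary plane trees (uncolored). Leaf is the empty tree;
  Node L R is a root vertex with left subtree L and right subtree R.\<close>
datatype bpt = Leaf | Node bpt bpt

fun nverts :: "bpt \<Rightarrow> nat" where
  "nverts Leaf = 0"
| "nverts (Node L R) = Suc (nverts L + nverts R)"

fun chain :: "bpt \<Rightarrow> bool" where
  "chain Leaf = True"
| "chain (Node L R) = ((L = Leaf \<or> R = Leaf) \<and> chain L \<and> chain R)"

definition is_branch :: "bpt \<Rightarrow> bool" where
  "is_branch T \<longleftrightarrow> T \<noteq> Leaf \<and> chain T"

text \<open>insertions T1 T2 is the set of all trees nabla_v(T1,T2), v ranging over the
  vertices of T1: the subtree S rooted at v is replaced by Node S T2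
  (new vertex v* with left child v and right subtree T2).\<close>
fun insertions :: "bpt \<Rightarrow> bpt \<Rightarrow> bpt set" where
  "insertions Leaf T2 = {}"
| "insertions (Node L R) T2 =
     {Node (Node L R) T2}
     \<union> (\<lambda>X. Node X R) ` insertions L T2
     \<union> (\<lambda>X. Node L X) ` insertions R T2"

definition weighted_troupe :: "(bpt \<Rightarrow> 'a::comm_ring_1) \<Rightarrow> bool" where
  "weighted_troupe tau \<longleftrightarrow> tau Leaf = 0 \<and>
     (\<forall>T1 T2 T. T1 \<noteq> Leaf \<longrightarrow> T2 \<noteq> Leaf \<longrightarrow> T \<in> insertions T1 T2 \<longrightarrow>
        tau T = tau T1 * tau T2)"

definition omega :: "(bpt \<Rightarrow> 'a::comm_ring_1) \<Rightarrow> nat \<Rightarrow> 'a" where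
  "omega tau n = (\<Sum>T\<in>{T. is_branch T \<and> nverts T = n}. tau T)"

definition omega_check :: "(bpt \<Rightarrow> 'a::comm_ring_1) \<Rightarrow> nat \<Rightarrow> 'a" where
  "omega_check tau n = (\<Sum>T\<in>{T. nverts T = n}. tau T)"

definition branch_gf :: "(bpt \<Rightarrow> 'a::comm_ring_1) \<Rightarrow> 'a fps" where
  "branch_gf tau = Abs_fps (\<lambda>n. if n = 0 then 0 else omega tau n)"

definition tree_gf :: "(bpt \<Rightarrow> 'a::comm_ring_1) \<Rightarrow> 'a fps" where
  "tree_gf tau = Abs_fps (\<lambda>n. if n = 0 then 0 else omega_check tau n)"

text \<open>The multiplicative inverse of 1 - u for u with zero constant term,
  written as the geometric series sum_k u^k (valid over any commutative ring).\<close>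
definition one_minus_inv :: "'a::comm_ring_1 fps \<Rightarrow> 'a fps" where
  "one_minus_inv u = fps_compose (Abs_fps (\<lambda>_. 1)) u"

end

theory Submission
  imports Defs
begin
unbundle fps_syntax

lemma fin_le: "finite {T. nverts T \<le> n}"
proof (induction n)
  case 0
  have "{T. nverts T \<le> 0} = {Leaf}" by (auto elim: nverts.elims)
  then show ?case by simp
next
  case (Suc n)
  have "{T. nverts T \<le> Suc n} \<subseteq> insert Leaf ((\<lambda>(L,R). Node L R) ` ({T. nverts T \<le> n} \<times> {T. nverts T \<le> n}))"
  proof
    fix T assume "T \<in> {T. nverts T \<le> Suc n}"
    then show "T \<in> insert Leaf ((\<lambda>(L,R). Node L R) ` ({T. nverts T \<le> n} \<times> {T. nverts T \<le> n}))"
      by (cases T) auto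
  qed
  then show ?case using Suc by (meson finite_SigmaI finite_imageI finite_insert finite_subset)
qed

lemma fin_eq: "finite {T. nverts T = n}"
  by (rule finite_subset[OF _ fin_le[of n]]) auto

definition gf :: "(bpt \<Rightarrow> 'a::comm_ring_1) \<Rightarrow> 'a fps" where
  "gf w = Abs_fps (\<lambda>n. \<Sum>T\<in>{T. nverts T = n}. w T)"

lemma gf_nth: "gf w $ n = (\<Sum>T\<in>{T. nverts T = n}. w T)"
  by (simp add: gf_def)

lemma nverts0: "{T. nverts T = 0} = {Leaf}"
  by (auto elim: nverts.elims)

lemma gf_node:
  fixes w1 w2 :: "bpt \<Rightarrow> 'a::comm_ring_1"
  shows "gf (\<lambda>T. case T of Leaf \<Rightarrow> 0 | Node L R \<Rightarrow> w1 L * w2 R) = fps_X * (gf w1 * gf w2)"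
proof (rule fps_ext)
  fix n
  show "gf (\<lambda>T. case T of Leaf \<Rightarrow> 0 | Node L R \<Rightarrow> w1 L * w2 R) $ n = (fps_X * (gf w1 * gf w2)) $ n"
  proof (cases n)
    case 0
    then show ?thesis by (simp add: gf_nth nverts0)
  next
    case (Suc m)
    define S where "S = Sigma {L. nverts L \<le> m} (\<lambda>L. {R. nverts R = m - nverts L})"
    have img: "{T. nverts T = Suc m} = (\<lambda>(L,R). Node L R) ` S"
    proof
      show "{T. nverts T = Suc m} \<subseteq> (\<lambda>(L,R). Node L R) ` S"
      proof
        fix T assume "T \<in> {T. nverts T = Suc m}"
        then show "T \<in> (\<lambda>(L,R). Node L R) ` S" unfolding S_def
          by (cases T) (auto simp: image_iff)
      qed
    qed (auto simp: S_def)
    have inj: "inj_on (\<lambda>(L,R). Node L R) S" by (auto simp: inj_on_def)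
    have finS: "finite S" unfolding S_def by (intro finite_SigmaI fin_le fin_eq)
    have "gf (\<lambda>T. case T of Leaf \<Rightarrow> 0 | Node L R \<Rightarrow> w1 L * w2 R) $ n
        = (\<Sum>(L,R)\<in>S. w1 L * w2 R)"
      unfolding gf_nth Suc img by (subst sum.reindex[OF inj]) (auto intro!: sum.cong)
    also have "\<dots> = (\<Sum>L\<in>{L. nverts L \<le> m}. \<Sum>R\<in>{R. nverts R = m - nverts L}. w1 L * w2 R)"
      unfolding S_def by (subst sum.Sigma) (auto intro: fin_le fin_eq)
    also have "\<dots> = (\<Sum>L\<in>{L. nverts L \<le> m}. w1 L * gf w2 $ (m - nverts L))"
      by (simp add: gf_nth sum_distrib_left)
    also have "\<dots> = (\<Sum>i\<in>{0..m}. \<Sum>L\<in>{L. L \<in> {L. nverts L \<le> m} \<and> nverts L = i}. w1 L * gf w2 $ (m - nverts L))"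
      by (rule sum.group[symmetric]) (auto intro: fin_le)
    also have "\<dots> = (\<Sum>i\<in>{0..m}. gf w1 $ i * gf w2 $ (m - i))"
    proof (rule sum.cong[OF refl])
      fix i assume "i \<in> {0..m}"
      then have "{L. L \<in> {L. nverts L \<le> m} \<and> nverts L = i} = {L. nverts L = i}" by auto
      then show "(\<Sum>L\<in>{L. L \<in> {L. nverts L \<le> m} \<and> nverts L = i}. w1 L * gf w2 $ (m - nverts L)) = gf w1 $ i * gf w2 $ (m - i)"
        by (simp add: gf_nth sum_distrib_right)
    qed
    also have "\<dots> = (gf w1 * gf w2) $ m"
      by (simp only: fps_mult_nth)
    also have "\<dots> = (fps_X * (gf w1 * gf w2)) $ n"
      by (simp add: Suc)
    finally show ?thesis .
  qed
qed

lemma omi_inv: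
  fixes u :: "'a::comm_ring_1 fps"
  assumes u0: "u $ 0 = 0"
  shows "(1 - u) * one_minus_inv u = 1"
proof (rule fps_ext)
  fix n
  define S where "S = (\<Sum>j<Suc n. u ^ j)"
  have A: "one_minus_inv u $ k = S $ k" if "k \<le> n" for k
  proof -
    have "one_minus_inv u $ k = (\<Sum>j=0..k. (u ^ j) $ k)"
      unfolding one_minus_inv_def fps_compose_nth by simp
    also have "\<dots> = (\<Sum>j=0..n. (u ^ j) $ k)"
      using startsby_zero_sum_depends[OF u0 that] by simp
    also have "\<dots> = S $ k" unfolding S_def fps_sum_nth
      by (rule sum.cong) auto
    finally show ?thesis .
  qed
  have "((1 - u) * one_minus_inv u) $ n = ((1 - u) * S) $ n"
    unfolding fps_mult_nth by (rule sum.cong) (auto simp: A)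
  also have "\<dots> = (1 - u ^ Suc n) $ n"
    unfolding S_def by (simp only: one_diff_power_eq)
  also have "\<dots> = 1 $ n"
    using startsby_zero_power_prefix[OF u0, rule_format, of n "Suc n"] by simp
  finally show "((1 - u) * one_minus_inv u) $ n = 1 $ n" .
qed

datatype ctx = Hole | CL ctx bpt | CR bpt ctx

fun plug :: "ctx \<Rightarrow> bpt \<Rightarrow> bpt" where
  "plug Hole T = T"
| "plug (CL c R) T = plug c (Node T R)"
| "plug (CR L c) T = plug c (Node L T)"

lemma ins_plug: "X \<in> insertions Y T2 \<Longrightarrow> plug c X \<in> insertions (plug c Y) T2"
proof (induction c arbitrary: X Y)
  case Hole then show ?case by simp
next
  case (CL c R)
  have "Node X R \<in> insertions (Node Y R) T2" using CL.prems by simp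
  then show ?case using CL.IH by simp
next
  case (CR L c)
  have "Node L X \<in> insertions (Node L Y) T2" using CR.prems by simp
  then show ?case using CR.IH by simp
qed

lemma plug_nonleaf: "T \<noteq> Leaf \<Longrightarrow> plug c T \<noteq> Leaf"
  by (induction c arbitrary: T) auto

lemma root_ins: "S \<noteq> Leaf \<Longrightarrow> Node S T2 \<in> insertions S T2"
  by (cases S) auto

fun red :: "bpt \<Rightarrow> bpt" where
  "red Leaf = Leaf"
| "red (Node L R) = (if L \<noteq> Leaf \<and> R \<noteq> Leaf then red L else Node (red L) (red R))"

fun rw :: "(bpt \<Rightarrow> 'a::comm_ring_1) \<Rightarrow> bpt \<Rightarrow> 'a" where
  "rw tau Leaf = 1"
| "rw tau (Node L R) = (if L \<noteq> Leaf \<and> R \<noteq> Leaf then rw tau L * tau R else rw tau L * rw tau R)"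

lemma tau_plug:
  assumes wt: "weighted_troupe tau"
  shows "tau (plug c T) = tau (plug c (red T)) * rw tau T"
proof (induction T arbitrary: c)
  case Leaf then show ?case by simp
next
  case (Node L R)
  show ?case
  proof (cases "L \<noteq> Leaf \<and> R \<noteq> Leaf")
    case True
    have "plug c (Node L R) \<in> insertions (plug c L) R"
      by (rule ins_plug[OF root_ins]) (use True in auto)
    then have "tau (plug c (Node L R)) = tau (plug c L) * tau R"
      using wt True plug_nonleaf[of L c] unfolding weighted_troupe_def by blast
    then show ?thesis using Node.IH(1)[of c] True by (simp add: mult.assoc)
  next
    case False
    have "tau (plug c (Node L R)) = tau (plug (CL c R) L)" by simp
    also have "\<dots> = tau (plug (CL c R) (red L)) * rw tau L" by (rule Node.IH(1))
    also have "tau (plug (CL c R) (red L)) = tau (plug (CR (red L) c) R)" by simp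
    also have "\<dots> = tau (plug (CR (red L) c) (red R)) * rw tau R" by (rule Node.IH(2))
    finally show ?thesis using False by (auto simp: mult_ac)
  qed
qed

lemma tau_red: "weighted_troupe tau \<Longrightarrow> tau T = tau (red T) * rw tau T"
  using tau_plug[of tau Hole T] by simp

lemma chain_red: "chain (red T)"
  by (induction T) auto

lemma nverts_red: "nverts (red T) \<le> nverts T"
  by (induction T) auto

lemma red_Leaf: "red T = Leaf \<longleftrightarrow> T = Leaf"
  by (induction T) auto


definition wb :: "(bpt \<Rightarrow> 'a::comm_ring_1) \<Rightarrow> bpt \<Rightarrow> bpt \<Rightarrow> 'a" where
  "wb tau b T = (if red T = b then rw tau T else 0)"

lemma gf_add: "gf (\<lambda>T. f T + g T) = gf f + gf g"
  by (rule fps_ext) (simp add: gf_nth sum.distrib)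

lemma gf_leaf: "gf (wb tau Leaf) = 1"
proof (rule fps_ext)
  fix n
  show "gf (wb tau Leaf) $ n = 1 $ n"
  proof (cases n)
    case 0 then show ?thesis by (simp add: gf_nth nverts0 wb_def)
  next
    case (Suc m)
    have "\<forall>T\<in>{T. nverts T = n}. wb tau Leaf T = 0"
      using Suc by (auto simp: wb_def red_Leaf)
    then show ?thesis using Suc by (simp add: gf_nth)
  qed
qed

lemma wb_rec:
  assumes "b = Node b1 b2" "b1 = Leaf \<or> b2 = Leaf" "tau Leaf = 0"
  shows "wb tau b T = (case T of Leaf \<Rightarrow> 0 | Node L R \<Rightarrow> wb tau b L * tau R)
     + (case T of Leaf \<Rightarrow> 0 | Node L R \<Rightarrow> wb tau b1 L * wb tau b2 R)"
  using assms by (cases T) (auto simp: wb_def red_Leaf)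

lemma F_node:
  fixes tau :: "bpt \<Rightarrow> 'a::comm_ring_1"
  assumes "b = Node b1 b2" "b1 = Leaf \<or> b2 = Leaf" "tau Leaf = 0"
  shows "gf (wb tau b) = fps_X * one_minus_inv (fps_X * gf tau) * (gf (wb tau b1) * gf (wb tau b2))"
proof -
  define F where "F = gf (wb tau b)"
  define P where "P = gf tau"
  define G where "G = one_minus_inv (fps_X * P)"
  define Q where "Q = gf (wb tau b1) * gf (wb tau b2)"
  have h: "wb tau b = (\<lambda>T. (case T of Leaf \<Rightarrow> 0 | Node L R \<Rightarrow> wb tau b L * tau R)
     + (case T of Leaf \<Rightarrow> 0 | Node L R \<Rightarrow> wb tau b1 L * wb tau b2 R))"
    by (intro ext) (rule wb_rec[where tau=tau, OF assms])
  have "F = gf (\<lambda>T. (case T of Leaf \<Rightarrow> 0 | Node L R \<Rightarrow> wb tau b L * tau R)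
     + (case T of Leaf \<Rightarrow> 0 | Node L R \<Rightarrow> wb tau b1 L * wb tau b2 R))"
    unfolding F_def by (rule arg_cong[where f=gf, OF h])
  also have "\<dots> = fps_X * (F * P) + fps_X * Q"
    unfolding F_def P_def Q_def by (simp only: gf_add gf_node)
  finally have e: "F = fps_X * (F * P) + fps_X * Q" .
  have inv: "(1 - fps_X * P) * G = 1" unfolding G_def by (rule omi_inv) simp
  have "F = F * ((1 - fps_X * P) * G)" by (simp add: inv)
  also have "\<dots> = (F - fps_X * (F * P)) * G" by (simp add: algebra_simps)
  also have "F - fps_X * (F * P) = fps_X * Q" using e by (metis add_diff_cancel_left')
  also have "fps_X * Q * G = fps_X * G * Q" by (simp add: mult_ac)
  finally show ?thesis unfolding F_def G_def P_def Q_def .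
qed

lemma F_chain:
  fixes tau :: "bpt \<Rightarrow> 'a::comm_ring_1"
  assumes "tau Leaf = 0"
  shows "chain b \<Longrightarrow> gf (wb tau b) = (fps_X * one_minus_inv (fps_X * gf tau)) ^ nverts b"
proof (induction b)
  case Leaf then show ?case by (simp add: gf_leaf)
next
  case (Node b1 b2)
  then have "gf (wb tau (Node b1 b2)) = fps_X * one_minus_inv (fps_X * gf tau) * (gf (wb tau b1) * gf (wb tau b2))"
    using F_node[where tau=tau, OF refl _ assms] by auto
  then show ?case using Node by (simp add: power_add algebra_simps)
qed


lemma branch_pos: "is_branch T \<Longrightarrow> nverts T \<noteq> 0"
  by (cases T) (auto simp: is_branch_def)

theorem theorem5p1:
  fixes tau :: "bpt \<Rightarrow> 'a::comm_ring_1"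
  assumes "weighted_troupe tau"
  shows "tree_gf tau =
    fps_compose (branch_gf tau) (fps_X * one_minus_inv (fps_X * tree_gf tau))"
proof -
  have t0: "tau Leaf = 0" using assms by (simp add: weighted_troupe_def)
  have tg: "tree_gf tau = gf tau"
  proof (rule fps_ext)
    fix n show "tree_gf tau $ n = gf tau $ n"
      by (cases n) (simp_all add: tree_gf_def gf_nth nverts0 t0 omega_check_def)
  qed
  define U where "U = fps_X * one_minus_inv (fps_X * gf tau)"
  show ?thesis unfolding tg U_def[symmetric]
  proof (rule fps_ext)
    fix n
    define B where "B = {b. is_branch b \<and> nverts b \<le> n}"
    have finB: "finite B" unfolding B_def by (rule finite_subset[OF _ fin_le[of n]]) auto
    have pt: "tau T = (\<Sum>b\<in>B. tau b * wb tau b T)" if "nverts T = n" for T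
    proof -
      have "(\<Sum>b\<in>B. tau b * wb tau b T) = (\<Sum>b\<in>B. if b = red T then tau (red T) * rw tau T else 0)"
        by (rule sum.cong) (auto simp: wb_def)
      also have "\<dots> = (if red T \<in> B then tau (red T) * rw tau T else 0)"
        using finB by simp
      also have "\<dots> = tau (red T) * rw tau T"
        using chain_red[of T] nverts_red[of T] that t0 by (auto simp: B_def is_branch_def)
      finally show ?thesis using tau_red[OF assms, of T] by simp
    qed
    have "gf tau $ n = (\<Sum>T\<in>{T. nverts T = n}. \<Sum>b\<in>B. tau b * wb tau b T)"
      unfolding gf_nth by (rule sum.cong) (auto simp: pt)
    also have "\<dots> = (\<Sum>b\<in>B. tau b * gf (wb tau b) $ n)"
      by (subst sum.swap) (simp add: gf_nth sum_distrib_left)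
    also have "\<dots> = (\<Sum>b\<in>B. tau b * (U ^ nverts b) $ n)"
      unfolding U_def by (rule sum.cong) (auto simp: B_def is_branch_def F_chain[where tau=tau, OF t0])
    also have "\<dots> = (\<Sum>i\<in>{0..n}. \<Sum>b\<in>{b. b \<in> B \<and> nverts b = i}. tau b * (U ^ nverts b) $ n)"
      by (rule sum.group[symmetric]) (use finB in \<open>auto simp: B_def\<close>)
    also have "\<dots> = (\<Sum>i\<in>{0..n}. branch_gf tau $ i * (U ^ i) $ n)"
    proof (rule sum.cong[OF refl])
      fix i assume i: "i \<in> {0..n}"
      have that: "{b. b \<in> B \<and> nverts b = i} = {T. is_branch T \<and> nverts T = i}"
        using i by (auto simp: B_def)
      show "(\<Sum>b\<in>{b. b \<in> B \<and> nverts b = i}. tau b * (U ^ nverts b) $ n) = branch_gf tau $ i * (U ^ i) $ n"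
      proof -
        have e0: "{T. is_branch T \<and> nverts T = 0} = {}" using branch_pos by auto
        show ?thesis
        proof (cases "i = 0")
          case True
          have "{b. b \<in> B \<and> nverts b = i} = {}" using that e0 True by simp
          then show ?thesis by (simp only: sum.empty) (simp add: branch_gf_def True)
        next
          case False then show ?thesis using that by (simp add: branch_gf_def omega_def sum_distrib_right)
        qed
      qed
    qed
    also have "\<dots> = (branch_gf tau oo U) $ n" by (simp add: fps_compose_nth)
    finally show "gf tau $ n = (branch_gf tau oo U) $ n" .
  qed
qed

end
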